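(* Let $\mathrm{dot}(\mathbf{x},\mathbf{y})=\langle\mathbf{x},\mathbf{y}\rangle$ for $\mathbf{x},\mathbf{y}\in\mathbb{R}^n$, with graph $\{(\mathbf{x},\mathbf{y},\langle\mathbf{x},\mathbf{y}\rangle)\}\subseteq\mathbb{R}^n\times\mathbb{R}^n\times\mathbb{R}$. Let $(\mathbf{x}_0,\mathbf{y}_0,z_0)\in\mathbb{R}^n\times\mathbb{R}^n\times\mathbb{R}$ with $\mathbf{x}_0\ne\mathbf{y}_0$ and $\mathbf{x}_0\ne-\mathbf{y}_0$, and put $p=\langle\mathbf{x}_0,\mathbf{y}_0\rangle$, $q=\|\mathbf{x}_0\|^2+\|\mathbf{y}_0\|^2$. Then the function $f(\lambda)=\frac{(1+\lambda^2)p+\lambda q}{(1-\lambda^2)^2}-z_0+\lambda$ has a unique root $\lambda$ in $(-1,1)$, the Euclidean projection of $(\mathbf{x}_0,\mathbf{y}_0,z_0)$ onto the graph of $\mathrm{dot}$ is unique, and it equals $(\mathbf{x}(\lambda),\mathbf{y}(\lambda),z_0-\lambda)$ where $\mathbf{x}(\lambda)=\frac{\mathbf{x}_0+\lambda\mathbf{y}_0}{1-\lambda^2}$ and $\mathbf{y}(\lambda)=\frac{\mathbf{y}_0+\lambda\mathbf{x}_0}{1-\lambda^2}$. *)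

theory Defs
  imports "HOL-Analysis.Analysis"
begin

text \<open>Graph of the bilinear map dot(x,y) = <x,y> on R^n x R^n, as a subset of R^n x R^n x R.
  The product type carries the Euclidean distance.\<close>
definition dot_graph :: "((real^'n) \<times> (real^'n) \<times> real) set" where
  "dot_graph = {(x, y, z). z = x \<bullet> y}"

definition proj_set :: "'a::metric_space set \<Rightarrow> 'a \<Rightarrow> 'a set" where
  "proj_set S p = {s \<in> S. \<forall>t\<in>S. dist p s \<le> dist p t}"

end

theory Submission imports Defs begin

lemma key_id:
  fixes a b d e :: "'a::real_inner" and l z0 :: real
  assumes "z0 = a \<bullet> b + l"
  shows "(norm ((a+d) - (a - l *\<^sub>R b)))^2 + (norm ((b+e) - (b - l *\<^sub>R a)))^2 + ((a+d)\<bullet>(b+e) - z0)^2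
   = (norm (a - (a - l *\<^sub>R b)))^2 + (norm (b - (b - l *\<^sub>R a)))^2 + l^2
     + (norm (d - l *\<^sub>R e))^2 + (1 - l^2) * (norm e)^2 + ((a+d)\<bullet>(b+e) - a\<bullet>b)^2"
  unfolding assms power2_norm_eq_inner
  by (simp add: inner_add_left inner_add_right inner_diff_left inner_diff_right inner_commute algebra_simps power2_eq_square)

lemma f_root:
  fixes A B z0 :: real
  assumes A: "A > 0" and B: "B > 0"
  defines "g \<equiv> (\<lambda>l. A / (1-l)^2 - B/(1+l)^2 - z0 + l)"
  shows "\<exists>!l. l \<in> {-1<..<1} \<and> g l = 0"
proof -
  have mono: "g l1 < g l2" if "-1 < l1" "l1 < l2" "l2 < 1" for l1 l2
  proof -
    have "A / (1-l1)^2 < A/(1-l2)^2"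
      using that A by (intro divide_strict_left_mono power_strict_mono) auto
    moreover have "B/(1+l2)^2 < B/(1+l1)^2"
      using that B by (intro divide_strict_left_mono power_strict_mono) auto
    ultimately show ?thesis unfolding g_def using that by linarith
  qed
  define t where "t = min 1 (B / (A + \<bar>z0\<bar> + 1))"
  define s where "s = min 1 (A / (B + \<bar>z0\<bar> + 1))"
  have t0: "0 < t" "t \<le> 1" "t \<le> B / (A + \<bar>z0\<bar> + 1)" using A B by (auto simp: t_def)
  have s0: "0 < s" "s \<le> 1" "s \<le> A / (B + \<bar>z0\<bar> + 1)" using A B by (auto simp: s_def)
  have ga: "g (-1 + t) \<le> 0"
  proof -
    have "B / t^2 \<ge> B / t" using t0 B
      by (intro divide_left_mono) (auto simp: power2_eq_square mult_le_cancel_left1)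
    moreover have "B / t \<ge> A + \<bar>z0\<bar> + 1"
    proof -
      have "t * (A + \<bar>z0\<bar> + 1) \<le> B" using t0 A by (simp add: le_divide_eq)
      then show ?thesis using t0 by (simp add: le_divide_eq mult.commute)
    qed
    moreover have "A / (1 - (-1+t))^2 \<le> A" using t0 A
      by (simp add: divide_le_eq power2_eq_square) (smt (verit) mult_le_cancel_left1 mult_nonneg_nonneg)
    ultimately show ?thesis unfolding g_def using t0 by simp
  qed
  have gb: "g (1 - s) \<ge> 0"
  proof -
    have "A / s^2 \<ge> A / s" using s0 A
      by (intro divide_left_mono) (auto simp: power2_eq_square mult_le_cancel_left1)
    moreover have "A / s \<ge> B + \<bar>z0\<bar> + 1"
    proof -
      have "s * (B + \<bar>z0\<bar> + 1) \<le> A" using s0 B by (simp add: le_divide_eq)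
      then show ?thesis using s0 by (simp add: le_divide_eq mult.commute)
    qed
    moreover have "B / (1 + (1-s))^2 \<le> B" using s0 B
      by (simp add: divide_le_eq power2_eq_square) (smt (verit) mult_le_cancel_left1 mult_nonneg_nonneg)
    ultimately show ?thesis unfolding g_def using s0 by simp
  qed
  have "continuous_on {-1+t..1-s} g"
    unfolding g_def using t0 s0 by (intro continuous_intros) auto
  then obtain l where l: "-1+t \<le> l" "l \<le> 1-s" "g l = 0"
    using IVT'[of g "-1+t" 0 "1-s"] ga gb t0 s0 by auto
  show ?thesis
  proof (rule ex1I[of _ l])
    show "l \<in> {-1<..<1} \<and> g l = 0" using l t0 s0 by auto
    fix m assume m: "m \<in> {-1<..<1} \<and> g m = 0"
    show "m = l"
    proof (rule ccontr)
      assume "m \<noteq> l"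
      then consider "m < l" | "l < m" by linarith
      then show False using mono[of m l] mono[of l m] m l t0 s0 by (cases; auto)
    qed
  qed
qed

lemma dist3: "dist (x0::'a::real_normed_vector, y0::'b::real_normed_vector, z0::real) (x, y, z)
   = sqrt ((norm (x - x0))^2 + (norm (y - y0))^2 + (z - z0)^2)"
proof -
  have "dist (x0, y0, z0) (x, y, z) = sqrt ((dist x0 x)^2 + (dist y0 y)^2 + (dist z0 z)^2)"
    by (simp add: dist_Pair_Pair add.assoc)
  then show ?thesis by (simp add: dist_norm norm_minus_commute dist_real_def power2_commute)
qed

lemma dot_graph_iff: "(x, y, z) \<in> dot_graph \<longleftrightarrow> z = x \<bullet> y"
  by (simp add: dot_graph_def)

theorem mainTheorem6:
  fixes x0 y0 :: "real^'n" and z0 :: real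
  assumes "x0 \<noteq> y0" and "x0 \<noteq> - y0"
  defines "p \<equiv> x0 \<bullet> y0"
      and "q \<equiv> (norm x0)^2 + (norm y0)^2"
  defines "f \<equiv> (\<lambda>l::real. ((1 + l^2) * p + l * q) / (1 - l^2)^2 - z0 + l)"
  shows "(\<exists>!l. l \<in> {-1<..<1} \<and> f l = 0)
       \<and> (\<forall>l. l \<in> {-1<..<1} \<and> f l = 0 \<longrightarrow>
            proj_set dot_graph (x0, y0, z0) =
              {((1 / (1 - l^2)) *\<^sub>R (x0 + l *\<^sub>R y0),
                (1 / (1 - l^2)) *\<^sub>R (y0 + l *\<^sub>R x0),
                z0 - l)})"
proof
  define A where "A = (norm (x0 + y0))^2 / 4"
  define B where "B = (norm (x0 - y0))^2 / 4"
  have A0: "A > 0" unfolding A_def using assms(2)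
    by (simp add: add_eq_0_iff2)
  have B0: "B > 0" unfolding B_def using assms(1) by simp
  have nA: "(norm (x0 + y0))^2 = q + 2*p" unfolding q_def p_def power2_norm_eq_inner
    by (simp add: inner_add_left inner_add_right inner_commute)
  have nB: "(norm (x0 - y0))^2 = q - 2*p" unfolding q_def p_def power2_norm_eq_inner
    by (simp add: inner_diff_left inner_diff_right inner_commute)
  have fg: "f l = A / (1-l)^2 - B/(1+l)^2 - z0 + l" if "l \<in> {-1<..<1}" for l
  proof -
    have h1: "1 - l \<noteq> 0" "1 + l \<noteq> 0" using that by auto
    have h2: "1 - l^2 = (1-l)*(1+l)" by (simp add: power2_eq_square algebra_simps)
    show ?thesis unfolding f_def A_def B_def nA nB h2 using h1
      apply (simp add: divide_simps power_mult_distrib)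
      apply (simp add: algebra_simps power2_eq_square)
      done
  qed
  have "\<exists>!l. l \<in> {-1<..<1} \<and> (\<lambda>l. A / (1-l)^2 - B/(1+l)^2 - z0 + l) l = 0"
    by (rule f_root[OF A0 B0])
  then show "\<exists>!l. l \<in> {-1<..<1} \<and> f l = 0"
    using fg by (metis (no_types, lifting))
next
  show "\<forall>l. l \<in> {-1<..<1} \<and> f l = 0 \<longrightarrow>
            proj_set dot_graph (x0, y0, z0) =
              {((1 / (1 - l^2)) *\<^sub>R (x0 + l *\<^sub>R y0),
                (1 / (1 - l^2)) *\<^sub>R (y0 + l *\<^sub>R x0),
                z0 - l)}"
  proof (intro allI impI)
    fix l assume l: "l \<in> {-1<..<1} \<and> f l = 0"
    define c where "c = 1 / (1 - l^2)"
    define xs where "xs = c *\<^sub>R (x0 + l *\<^sub>R y0)"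
    define ys where "ys = c *\<^sub>R (y0 + l *\<^sub>R x0)"
    have l2: "l^2 < 1" using l by (simp add: abs_less_iff power2_less_1_iff)
    have c1: "c * (1 - l^2) = 1" unfolding c_def using l2 by simp
    have hx: "x0 = xs - l *\<^sub>R ys"
    proof -
      have "xs - l *\<^sub>R ys = (c * (1 - l^2)) *\<^sub>R x0"
        by (simp add: xs_def ys_def algebra_simps power2_eq_square)
      then show ?thesis using c1 by simp
    qed
    have hy: "y0 = ys - l *\<^sub>R xs"
    proof -
      have "ys - l *\<^sub>R xs = (c * (1 - l^2)) *\<^sub>R y0"
        by (simp add: xs_def ys_def algebra_simps power2_eq_square)
      then show ?thesis using c1 by simp
    qed
    have ip: "xs \<bullet> ys = ((1 + l^2) * p + l * q) / (1 - l^2)^2"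
    proof -
      have "xs \<bullet> ys = c^2 * ((1 + l^2) * p + l * q)"
        unfolding xs_def ys_def p_def q_def power2_norm_eq_inner
        by (simp add: inner_add_left inner_add_right inner_commute algebra_simps power2_eq_square)
      then show ?thesis by (simp add: c_def power_divide)
    qed
    have hz: "z0 = xs \<bullet> ys + l" using l ip unfolding f_def by simp
    have D: "(dist (x0, y0, z0) (x, y, x \<bullet> y))^2 = (dist (x0, y0, z0) (xs, ys, xs \<bullet> ys))^2
        + (norm ((x - xs) - l *\<^sub>R (y - ys)))^2 + (1 - l^2) * (norm (y - ys))^2 + (x \<bullet> y - xs \<bullet> ys)^2"
      for x y
    proof -
      have k: "(norm ((xs+(x-xs)) - (xs - l *\<^sub>R ys)))^2 + (norm ((ys+(y-ys)) - (ys - l *\<^sub>R xs)))^2 + ((xs+(x-xs))\<bullet>(ys+(y-ys)) - z0)^2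
   = (norm (xs - (xs - l *\<^sub>R ys)))^2 + (norm (ys - (ys - l *\<^sub>R xs)))^2 + l^2
     + (norm ((x-xs) - l *\<^sub>R (y-ys)))^2 + (1 - l^2) * (norm (y-ys))^2 + ((xs+(x-xs))\<bullet>(ys+(y-ys)) - xs\<bullet>ys)^2"
        by (rule key_id[OF hz])
      have e: "(xs \<bullet> ys - z0)^2 = l^2" using hz by (simp add: power2_eq_square)
      have xe: "xs + (x - xs) = x" "ys + (y - ys) = y" by simp_all
      note k2 = k[unfolded xe hx[symmetric] hy[symmetric]]
      have ee: "(norm (xs - x0))^2 + (norm (ys - y0))^2 + l^2 = (dist (x0, y0, z0) (xs, ys, xs \<bullet> ys))^2"
      proof -
        have "(dist (x0, y0, z0) (xs, ys, xs \<bullet> ys))^2 = (norm (xs - x0))^2 + (norm (ys - y0))^2 + (xs \<bullet> ys - z0)^2"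
          unfolding dist3 by (rule real_sqrt_pow2) simp
        then show ?thesis using e by simp
      qed
      have "(dist (x0, y0, z0) (x, y, x \<bullet> y))^2 = (norm (x - x0))^2 + (norm (y - y0))^2 + (x \<bullet> y - z0)^2"
        unfolding dist3 by (rule real_sqrt_pow2) simp
      then show ?thesis using k2 ee by linarith
    qed
    have Qnn: "0 \<le> (norm ((x - xs) - l *\<^sub>R (y - ys)))^2 + (1 - l^2) * (norm (y - ys))^2 + (x \<bullet> y - xs \<bullet> ys)^2" for x y
      using l2 by (intro add_nonneg_nonneg) auto
    have star: "(xs, ys, z0 - l) \<in> dot_graph" using hz by (simp add: dot_graph_iff)
    have zs: "z0 - l = xs \<bullet> ys" using hz by simp
    show "proj_set dot_graph (x0, y0, z0) =
              {((1 / (1 - l^2)) *\<^sub>R (x0 + l *\<^sub>R y0),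
                (1 / (1 - l^2)) *\<^sub>R (y0 + l *\<^sub>R x0),
                z0 - l)}"
      unfolding c_def[symmetric] xs_def[symmetric] ys_def[symmetric]
    proof (rule set_eqI, rule iffI)
      fix s assume s: "s \<in> proj_set dot_graph (x0, y0, z0)"
      obtain x y z where sxyz: "s = (x, y, z)" by (cases s) auto
      have zxy: "z = x \<bullet> y" using s sxyz by (simp add: proj_set_def dot_graph_iff)
      have "dist (x0, y0, z0) (x, y, x \<bullet> y) \<le> dist (x0, y0, z0) (xs, ys, xs \<bullet> ys)"
        using s star zs sxyz zxy unfolding proj_set_def by auto
      then have "(dist (x0, y0, z0) (x, y, x \<bullet> y))^2 \<le> (dist (x0, y0, z0) (xs, ys, xs \<bullet> ys))^2"
        by (simp add: power_mono)
      then have le0: "(norm ((x - xs) - l *\<^sub>R (y - ys)))^2 + (1 - l^2) * (norm (y - ys))^2 + (x \<bullet> y - xs \<bullet> ys)^2 \<le> 0"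
        using D[of x y] by linarith
      have t1: "0 \<le> (norm ((x - xs) - l *\<^sub>R (y - ys)))^2" by simp
      have t2: "0 \<le> (1 - l^2) * (norm (y - ys))^2" using l2 by simp
      have t3: "0 \<le> (x \<bullet> y - xs \<bullet> ys)^2" by simp
      have "(1 - l^2) * (norm (y - ys))^2 = 0" using le0 t1 t2 t3 by linarith
      then have yy: "y = ys" using l2 by simp
      have "(norm ((x - xs) - l *\<^sub>R (y - ys)))^2 = 0" using le0 t1 t2 t3 by linarith
      then have xx: "x = xs" using yy by simp
      show "s \<in> {(xs, ys, z0 - l)}" using sxyz zxy xx yy zs by simp
    next
      fix s assume "s \<in> {(xs, ys, z0 - l)}"
      then have ss: "s = (xs, ys, xs \<bullet> ys)" using zs by (simp only: singleton_iff)
      show "s \<in> proj_set dot_graph (x0, y0, z0)"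
        unfolding proj_set_def
      proof (intro CollectI conjI ballI)
        show "s \<in> dot_graph" unfolding ss dot_graph_iff by (rule refl)
        fix t :: "(real^'n) \<times> (real^'n) \<times> real" assume t: "t \<in> dot_graph"
        obtain x y z where txyz: "t = (x, y, z)" by (cases t) auto
        have zxy: "z = x \<bullet> y" using t txyz by (simp add: dot_graph_iff)
        have "(dist (x0, y0, z0) (xs, ys, xs \<bullet> ys))^2 \<le> (dist (x0, y0, z0) (x, y, x \<bullet> y))^2"
          using D[of x y] Qnn[of x y] by linarith
        then have "dist (x0, y0, z0) (xs, ys, xs \<bullet> ys) \<le> dist (x0, y0, z0) (x, y, x \<bullet> y)"
          by (rule power2_le_imp_le) simp
        then show "dist (x0, y0, z0) s \<le> dist (x0, y0, z0) t" unfolding ss txyz zxy .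
      qed
    qed
  qed
qed

end
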